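(* For a solution as in the setting on $S^1\times(R_s,R_i]$ with $0<R_s<R_i$, define $\tilde{\mathcal{E}}(R)=\mathcal{E}(R)+\int_{S^1}\frac{e^{2\beta}K^2}{4\sqrt\alpha\,R^4}\,d\theta$. Then $$\frac{d\tilde{\mathcal{E}}}{dR}=-\int_{S^1}\left(\frac{e^{2\beta}K^2}{\sqrt\alpha\,R^5}+\frac{2U_R^2}{\sqrt\alpha\,R}+\frac{\sqrt\alpha\,e^{4U}A_\theta^2}{2R^3}\right)d\theta\le 0,$$ and for every $R_k\in(R_s,R_i]$, $\tilde{\mathcal{E}}(R_k)\le\tilde{\mathcal{E}}(R_i)\,(R_i/R_k)^4$.
   Context: Setting. A smooth vacuum $T^2$ symmetric spacetime in areal coordinates $(\theta,x,y,R)$, $\theta\in S^1=\mathbb{R}/\mathbb{Z}$, with metric $g=e^{2(\nu-U)}(-\alpha\,dR^2+d\theta^2)+e^{2U}[dx+A\,dy+(G+AH)\,d\theta]^2+e^{-2U}R^2(dy+H\,d\theta)^2$, where $\alpha>0,\nu,U,A,G,H$ are smooth functions of $(\theta,R)$ only, periodic in $\theta$; $K\ge0$ is the constant twist, the other twist vanishing; $\beta=\nu+\tfrac12\ln\alpha$. The vacuum equations are: $\beta_R=\sqrt{\alpha}Rh-\frac{e^{2\beta}K^2}{4R^3}$, $\beta_\theta=2R\big(U_RU_\theta+\frac{e^{4U}}{4R^2}A_RA_\theta\big)$, $\alpha_R=-\frac{\alpha e^{2\beta}K^2}{R^3}$, $U_{RR}-\alpha U_{\theta\theta}=-\frac{U_R}{R}+\frac{\alpha_RU_R}{2\alpha}+\frac{\alpha_\theta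 U_\theta}{2}+\frac{e^{4U}}{2R^2}(A_R^2-\alpha A_\theta^2)$, $A_{RR}-\alpha A_{\theta\theta}=\frac{A_R}{R}+\frac{\alpha_RA_R}{2\alpha}+\frac{\alpha_\theta A_\theta}{2}-4A_RU_R+4\alpha A_\theta U_\theta$, $G_R=-AH_R$, $H_R=\frac{e^{2\beta}K}{\sqrt{\alpha}R^3}$, with $h=\frac{U_R^2}{\sqrt\alpha}+\sqrt\alpha\,U_\theta^2+\frac{e^{4U}}{4R^2}\Big(\frac{A_R^2}{\sqrt\alpha}+\sqrt\alpha\,A_\theta^2\Big)$ and $\mathcal{E}(R)=\int_{S^1}h\,d\theta$. *)

theory Defs
  imports "HOL-Analysis.Analysis"
begin

definition dth :: "(real \<Rightarrow> real \<Rightarrow> real) \<Rightarrow> real \<Rightarrow> real \<Rightarrow> real" where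
  "dth f \<theta> R = deriv (\<lambda>t. f t R) \<theta>"

definition dR :: "(real \<Rightarrow> real \<Rightarrow> real) \<Rightarrow> real \<Rightarrow> real \<Rightarrow> real" where
  "dR f \<theta> R = deriv (\<lambda>r. f \<theta> r) R"

fun Ck :: "nat \<Rightarrow> (real \<times> real) set \<Rightarrow> (real \<Rightarrow> real \<Rightarrow> real) \<Rightarrow> bool" where
  "Ck 0 S f = continuous_on S (\<lambda>p. f (fst p) (snd p))"
| "Ck (Suc k) S f =
     (continuous_on S (\<lambda>p. f (fst p) (snd p)) \<and>
      (\<forall>p\<in>S. (\<lambda>t. f t (snd p)) differentiable (at (fst p)) \<and>
             (\<lambda>r. f (fst p) r) differentiable (at (snd p))) \<and>
      Ck k S (dth f) \<and> Ck k S (dR f))"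

definition smooth_on2 :: "(real \<times> real) set \<Rightarrow> (real \<Rightarrow> real \<Rightarrow> real) \<Rightarrow> bool" where
  "smooth_on2 S f \<longleftrightarrow> (\<forall>k. Ck k S f)"

text \<open>Smooth on the strip S^1 x (Rs,Ri]: smooth on an open neighbourhood of
  R x (Rs,Ri] (the closed end Ri is a smooth boundary), and 1-periodic in theta.\<close>

definition smooth_periodic :: "real \<Rightarrow> real \<Rightarrow> (real \<Rightarrow> real \<Rightarrow> real) \<Rightarrow> bool" where
  "smooth_periodic Rs Ri f \<longleftrightarrow>
     (\<exists>W. open W \<and> UNIV \<times> {Rs<..Ri} \<subseteq> W \<and> smooth_on2 W f) \<and>
     (\<forall>\<theta> R. R \<in> {Rs<..Ri} \<longrightarrow> f (\<theta> + 1) R = f \<theta> R)"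

text \<open>Energy density h and energy E(R) = integral over S^1 = [0,1].\<close>

definition hdens :: "(real \<Rightarrow> real \<Rightarrow> real) \<Rightarrow> (real \<Rightarrow> real \<Rightarrow> real) \<Rightarrow> (real \<Rightarrow> real \<Rightarrow> real)
    \<Rightarrow> real \<Rightarrow> real \<Rightarrow> real" where
  "hdens \<alpha> U A \<theta> R =
     (dR U \<theta> R)\<^sup>2 / sqrt (\<alpha> \<theta> R) + sqrt (\<alpha> \<theta> R) * (dth U \<theta> R)\<^sup>2
     + exp (4 * U \<theta> R) / (4 * R\<^sup>2) *
       ((dR A \<theta> R)\<^sup>2 / sqrt (\<alpha> \<theta> R) + sqrt (\<alpha> \<theta> R) * (dth A \<theta> R)\<^sup>2)"

definition energy :: "(real \<Rightarrow> real \<Rightarrow> real) \<Rightarrow> (real \<Rightarrow> real \<Rightarrow> real) \<Rightarrow> (real \<Rightarrow> real \<Rightarrow> real)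
    \<Rightarrow> real \<Rightarrow> real" where
  "energy \<alpha> U A R = integral {0..1} (\<lambda>\<theta>. hdens \<alpha> U A \<theta> R)"

definition modified_energy :: "(real \<Rightarrow> real \<Rightarrow> real) \<Rightarrow> (real \<Rightarrow> real \<Rightarrow> real)
    \<Rightarrow> (real \<Rightarrow> real \<Rightarrow> real) \<Rightarrow> (real \<Rightarrow> real \<Rightarrow> real) \<Rightarrow> real \<Rightarrow> real \<Rightarrow> real" where
  "modified_energy \<alpha> \<beta> U A K R =
     energy \<alpha> U A R
     + integral {0..1} (\<lambda>\<theta>. exp (2 * \<beta> \<theta> R) * K\<^sup>2 / (4 * sqrt (\<alpha> \<theta> R) * R ^ 4))"

text \<open>The vacuum T^2-symmetric Einstein equations in areal coordinates, with
  beta = nu + ln(alpha)/2, on the strip S^1 x (Rs,Ri].\<close>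

definition T2_vacuum :: "real \<Rightarrow> real \<Rightarrow> real \<Rightarrow> (real \<Rightarrow> real \<Rightarrow> real) \<Rightarrow> (real \<Rightarrow> real \<Rightarrow> real)
    \<Rightarrow> (real \<Rightarrow> real \<Rightarrow> real) \<Rightarrow> (real \<Rightarrow> real \<Rightarrow> real) \<Rightarrow> (real \<Rightarrow> real \<Rightarrow> real)
    \<Rightarrow> (real \<Rightarrow> real \<Rightarrow> real) \<Rightarrow> (real \<Rightarrow> real \<Rightarrow> real) \<Rightarrow> bool" where
  "T2_vacuum Rs Ri K \<alpha> \<nu> \<beta> U A G H \<longleftrightarrow>
     0 < Rs \<and> Rs < Ri \<and> 0 \<le> K \<and>
     smooth_periodic Rs Ri \<alpha> \<and> smooth_periodic Rs Ri \<nu> \<and> smooth_periodic Rs Ri U \<and>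
     smooth_periodic Rs Ri A \<and> smooth_periodic Rs Ri G \<and> smooth_periodic Rs Ri H \<and>
     (\<forall>\<theta> R. R \<in> {Rs<..Ri} \<longrightarrow>
        0 < \<alpha> \<theta> R \<and>
        \<beta> \<theta> R = \<nu> \<theta> R + ln (\<alpha> \<theta> R) / 2 \<and>
        dR \<beta> \<theta> R = sqrt (\<alpha> \<theta> R) * R * hdens \<alpha> U A \<theta> R
                      - exp (2 * \<beta> \<theta> R) * K\<^sup>2 / (4 * R ^ 3) \<and>
        dth \<beta> \<theta> R = 2 * R * (dR U \<theta> R * dth U \<theta> R
                      + exp (4 * U \<theta> R) / (4 * R\<^sup>2) * dR A \<theta> R * dth A \<theta> R) \<and>
        dR \<alpha> \<theta> R = - \<alpha> \<theta> R * exp (2 * \<beta> \<theta> R) * K\<^sup>2 / R ^ 3 \<and>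
        dR (dR U) \<theta> R - \<alpha> \<theta> R * dth (dth U) \<theta> R =
          - dR U \<theta> R / R + dR \<alpha> \<theta> R * dR U \<theta> R / (2 * \<alpha> \<theta> R)
          + dth \<alpha> \<theta> R * dth U \<theta> R / 2
          + exp (4 * U \<theta> R) / (2 * R\<^sup>2) * ((dR A \<theta> R)\<^sup>2 - \<alpha> \<theta> R * (dth A \<theta> R)\<^sup>2) \<and>
        dR (dR A) \<theta> R - \<alpha> \<theta> R * dth (dth A) \<theta> R =
          dR A \<theta> R / R + dR \<alpha> \<theta> R * dR A \<theta> R / (2 * \<alpha> \<theta> R)
          + dth \<alpha> \<theta> R * dth A \<theta> R / 2
          - 4 * dR A \<theta> R * dR U \<theta> R + 4 * \<alpha> \<theta> R * dth A \<theta> R * dth U \<theta> R \<and>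
        dR G \<theta> R = - A \<theta> R * dR H \<theta> R \<and>
        dR H \<theta> R = exp (2 * \<beta> \<theta> R) * K / (sqrt (\<alpha> \<theta> R) * R ^ 3))"

end

theory Submission
  imports Defs
begin


lemma comb_lemma:
  fixes UL DU XU AL DA XA BL XB T1 T2 T3 T3' :: real
  shows "UL - DU = XU \<Longrightarrow> AL - DA = XA \<Longrightarrow> BL = XB \<Longrightarrow> T3 = T3' \<Longrightarrow> XU + XA + XB + (T1 + T2 + T3') = 0
    \<Longrightarrow> (UL + AL + BL) + (T1 + T2 + T3) = DU + DA"
  by linarith
lemma alg_core:
  fixes s r E B K uR uT uTT uTR aR aT aTT aTR alT uRR aRR alR bR h :: real
  assumes s: "s > 0" and r: "r > 0"
  and alR: "alR = - (s^2 * B * K^2 / r^3)"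
  and uRR: "uRR - s^2 * uTT = - uR / r + alR * uR / (2 * s^2) + alT * uT / 2 + E / (2 * r^2) * (aR^2 - s^2 * aT^2)"
  and aRR: "aRR - s^2 * aTT = aR / r + alR * aR / (2 * s^2) + alT * aT / 2 - 4 * aR * uR + 4 * s^2 * aT * uT"
  and h: "h = uR^2 / s + s * uT^2 + E / (4 * r^2) * (aR^2 / s + s * aT^2)"
  and bR: "bR = s * r * h - B * K^2 / (4 * r^3)"
  shows "((2 * uR * uRR / s - uR^2 * (alR / (2 * s)) / s^2 + (alR / (2 * s)) * uT^2 + 2 * s * uT * uTR)
        + (E / (4 * r^2) * (4 * uR - 2 / r) * (aR^2 / s + s * aT^2)
        + E / (4 * r^2) * (2 * aR * aRR / s - aR^2 * (alR / (2 * s)) / s^2 + (alR / (2 * s)) * aT^2 + 2 * s * aT * aTR))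
        + K^2 / 4 * (2 * bR * B / (s * r^4) - B * (alR / (2 * s)) / (s^2 * r^4) - 4 * B / (s * r^5)))
      + (B * K^2 / (s * r^5) + 2 * uR^2 / (s * r) + s * E * aT^2 / (2 * r^3))
    = (2 * (alT / (2 * s)) * uT * uR + 2 * s * uTT * uR + 2 * s * uT * uTR)
      + (2 * (4 * uT * (E / (4 * r^2))) * s * aT * aR + 2 * (E / (4 * r^2)) * (alT / (2 * s)) * aT * aR
      + 2 * (E / (4 * r^2)) * s * aTT * aR + 2 * (E / (4 * r^2)) * s * aT * aTR)"
proof -
  define c where "c = B * K^2 / r^3"
  define f where "f = E / (4 * r^2)"
  have alR': "alR = - (s^2 * c)" using alR by (simp add: c_def)
  have sR: "alR / (2 * s) = - (s * c / 2)" using s unfolding alR' by (simp add: power2_eq_square)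
  have c2: "\<And>x. alR * x / (2 * s^2) = - (c/2) * x" using s unfolding alR' by simp
  have f2: "E / (2 * r^2) = 2 * f" by (simp add: f_def)
  have uRR': "uRR = s^2 * uTT - uR / r - c/2 * uR + alT * uT / 2 + 2 * f * (aR^2 - s^2 * aT^2)"
    using uRR unfolding f2 c2 by (simp add: algebra_simps)
  have aRR': "aRR = s^2 * aTT + aR / r - c/2 * aR + alT * aT / 2 - 4 * aR * uR + 4 * s^2 * aT * uT"
    using aRR unfolding c2 by (simp add: algebra_simps)
  have h': "h = uR^2 / s + s * uT^2 + f * (aR^2 / s + s * aT^2)" using h by (simp add: f_def)
  have bR': "bR = s * r * h - c / 4" using bR by (simp add: c_def)
  have stepU: "2 * uR * uRR / s - uR^2 * (- (s * c / 2)) / s^2 + (- (s * c / 2)) * uT^2 + 2 * s * uT * uTR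
     - (2 * (alT / (2 * s)) * uT * uR + 2 * s * uTT * uR + 2 * s * uT * uTR)
     = - 2 * uR^2 / (r * s) - c * uR^2 / (2 * s) - s * c * uT^2 / 2 + 4 * f * uR * aR^2 / s - 4 * f * uR * s * aT^2"
    unfolding uRR' using s r by (simp add: field_simps power2_eq_square)
  have stepA: "f * (4 * uR - 2 / r) * (aR^2 / s + s * aT^2)
        + f * (2 * aR * aRR / s - aR^2 * (- (s * c / 2)) / s^2 + (- (s * c / 2)) * aT^2 + 2 * s * aT * aTR)
        - (2 * (4 * uT * f) * s * aT * aR + 2 * f * (alT / (2 * s)) * aT * aR
      + 2 * f * s * aTT * aR + 2 * f * s * aT * aTR)
     = f * (- 4 * uR * aR^2 / s + 4 * uR * s * aT^2 - 2 * s * aT^2 / r - c * aR^2 / (2 * s) - s * c * aT^2 / 2)"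
    unfolding aRR' using s r by (simp add: field_simps power2_eq_square)
  have stepB: "K^2 / 4 * (2 * bR * B / (s * r^4) - B * (- (s * c / 2)) / (s^2 * r^4) - 4 * B / (s * r^5))
     = c / 2 * h - B * K^2 / (s * r^5)"
    unfolding bR' c_def using s r by (simp add: field_simps eval_nat_numeral)
  have stepT: "s * E * aT^2 / (2 * r^3) = 2 * f * s * aT^2 / r"
    unfolding f_def using r by (simp add: field_simps eval_nat_numeral)
  have fin: "(- 2 * uR^2 / (r * s) - c * uR^2 / (2 * s) - s * c * uT^2 / 2 + 4 * f * uR * aR^2 / s - 4 * f * uR * s * aT^2)
    + f * (- 4 * uR * aR^2 / s + 4 * uR * s * aT^2 - 2 * s * aT^2 / r - c * aR^2 / (2 * s) - s * c * aT^2 / 2)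
    + (c / 2 * h - B * K^2 / (s * r^5)) + (B * K^2 / (s * r^5) + 2 * uR^2 / (s * r) + 2 * f * s * aT^2 / r) = 0"
    unfolding h' using s r by (simp add: field_simps)
  show ?thesis
    unfolding sR f_def[symmetric] 
    by (rule comb_lemma[OF stepU stepA stepB stepT fin])
qed

lemma sqrt_der:
  assumes "(al has_real_derivative alR) (at x within X)" "al x > 0"
  shows "((\<lambda>r. sqrt (al r)) has_real_derivative alR / (2 * sqrt (al x))) (at x within X)"
proof -
  have "(sqrt has_real_derivative inverse (sqrt (al x)) / 2) (at (al x))"
    using assms(2) by (intro DERIV_real_sqrt) simp
  from DERIV_chain2[OF this assms(1)] show ?thesis by (simp add: field_simps)
qed

lemma DERIV_eqI: "(f has_real_derivative D) F \<Longrightarrow> D = E \<Longrightarrow> (f has_real_derivative E) F"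
  by simp

lemma exp_der: "(g has_real_derivative D) (at x within X) \<Longrightarrow> ((\<lambda>r. exp (g r)) has_real_derivative exp (g x) * D) (at x within X)"
  by (rule DERIV_chain2[OF DERIV_exp])

lemma sq_der: "(g has_real_derivative D) (at x within X) \<Longrightarrow> ((\<lambda>r. (g r)\<^sup>2) has_real_derivative 2 * g x * D) (at x within X)"
  by (drule DERIV_power[where n=2]) (simp add: algebra_simps)

lemma d_T1:
  assumes "(al has_real_derivative alR) (at x within X)" "(uR has_real_derivative uRR) (at x within X)" "al x > 0"
  shows "((\<lambda>r. (uR r)\<^sup>2 / sqrt (al r)) has_real_derivative
     (2 * uR x * uRR / sqrt (al x) - (uR x)^2 * (alR / (2 * sqrt (al x))) / (sqrt (al x))^2)) (at x within X)"
  by (rule DERIV_eqI[OF DERIV_divide[OF sq_der[OF assms(2)] sqrt_der[OF assms(1,3)]]])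
    (use assms(3) in \<open>simp_all add: field_simps power2_eq_square\<close>)

lemma d_T2:
  assumes "(al has_real_derivative alR) (at x within X)" "(uT has_real_derivative uTR) (at x within X)" "al x > 0"
  shows "((\<lambda>r. sqrt (al r) * (uT r)\<^sup>2) has_real_derivative
     ((alR / (2 * sqrt (al x))) * (uT x)^2 + 2 * sqrt (al x) * uT x * uTR)) (at x within X)"
  using DERIV_mult[OF sqrt_der[OF assms(1,3)] sq_der[OF assms(2)]] assms(3)
  by (elim DERIV_eqI) (simp add: field_simps power2_eq_square)

lemma d_T3:
  assumes "(al has_real_derivative alR) (at x within X)" "(u has_real_derivative uR) (at x within X)"
    "(aR has_real_derivative aRR) (at x within X)" "(aT has_real_derivative aTR) (at x within X)" "al x > 0" "x > 0"
  shows "((\<lambda>r. exp (4 * u r) / (4 * r\<^sup>2) * ((aR r)\<^sup>2 / sqrt (al r) + sqrt (al r) * (aT r)\<^sup>2)) has_real_derivative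
     (exp (4 * u x) / (4 * x^2) * (4 * uR - 2 / x) * ((aR x)^2 / sqrt (al x) + sqrt (al x) * (aT x)^2)
        + exp (4 * u x) / (4 * x^2) * (2 * aR x * aRR / sqrt (al x) - (aR x)^2 * (alR / (2 * sqrt (al x))) / (sqrt (al x))^2
            + (alR / (2 * sqrt (al x))) * (aT x)^2 + 2 * sqrt (al x) * aT x * aTR))) (at x within X)"
proof -
  have e0: "((\<lambda>r. exp (4 * u r)) has_real_derivative exp (4 * u x) * (4 * uR)) (at x within X)"
    by (rule exp_der[OF DERIV_cmult[OF assms(2)]])
  have e1: "((\<lambda>r. 4 * r\<^sup>2) has_real_derivative 4 * (2 * x * 1)) (at x within X)"
    by (rule DERIV_cmult[OF sq_der[OF DERIV_ident]])
  have e: "((\<lambda>r. exp (4 * u r) / (4 * r\<^sup>2)) has_real_derivative exp (4 * u x) / (4 * x^2) * (4 * uR - 2 / x)) (at x within X)"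
    by (rule DERIV_eqI[OF DERIV_divide[OF e0 e1]])
      (use assms(6) in \<open>simp_all add: field_simps power2_eq_square\<close>)
  have a1: "((\<lambda>r. (aR r)\<^sup>2 / sqrt (al r)) has_real_derivative
     (2 * aR x * aRR / sqrt (al x) - (aR x)^2 * (alR / (2 * sqrt (al x))) / (sqrt (al x))^2)) (at x within X)"
    by (rule d_T1) (use assms in auto)
  have a2: "((\<lambda>r. sqrt (al r) * (aT r)\<^sup>2) has_real_derivative
     ((alR / (2 * sqrt (al x))) * (aT x)^2 + 2 * sqrt (al x) * aT x * aTR)) (at x within X)"
    by (rule d_T2) (use assms in auto)
  from DERIV_mult[OF e DERIV_add[OF a1 a2]] show ?thesis
    by (elim DERIV_eqI) (simp add: algebra_simps)
qed

lemma d_T4: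
  assumes "(al has_real_derivative alR) (at x within X)" "(b has_real_derivative bR) (at x within X)" "al x > 0" "x > 0"
  shows "((\<lambda>r. exp (2 * b r) * K\<^sup>2 / (4 * sqrt (al r) * r ^ 4)) has_real_derivative
     K^2 / 4 * (2 * bR * exp (2 * b x) / (sqrt (al x) * x^4) - exp (2 * b x) * (alR / (2 * sqrt (al x))) / ((sqrt (al x))^2 * x^4)
        - 4 * exp (2 * b x) / (sqrt (al x) * x^5))) (at x within X)"
proof -
  have e0: "((\<lambda>r. exp (2 * b r) * K\<^sup>2) has_real_derivative exp (2 * b x) * (2 * bR) * K\<^sup>2) (at x within X)"
    by (rule DERIV_mult'[OF exp_der[OF DERIV_cmult[OF assms(2)]] DERIV_const, THEN DERIV_eqI]) simp
  have e1: "((\<lambda>r. 4 * sqrt (al r) * r ^ 4) has_real_derivative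
      4 * (alR / (2 * sqrt (al x))) * x ^ 4 + 4 * sqrt (al x) * (4 * x^3)) (at x within X)"
    using DERIV_mult[OF DERIV_cmult[OF sqrt_der[OF assms(1,3)], of 4] DERIV_pow[of 4 x X]]
    by (elim DERIV_eqI) (simp add: algebra_simps)
  show ?thesis
    by (rule DERIV_eqI[OF DERIV_divide[OF e0 e1]])
      (use assms(3,4) in \<open>simp_all add: field_simps eval_nat_numeral\<close>)
qed

lemma d_D:
  assumes al: "(al has_real_derivative alT) (at t)" and u: "(u has_real_derivative uT t) (at t)"
    and uT: "(uT has_real_derivative uTT) (at t)" and uR: "(uR has_real_derivative uTR) (at t)"
    and aT: "(aT has_real_derivative aTT) (at t)" and aR: "(aR has_real_derivative aTR) (at t)"
    and pos: "al t > 0"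
  shows "((\<lambda>t. 2 * sqrt (al t) * uT t * uR t + 2 * (exp (4 * u t) / (4 * r^2)) * sqrt (al t) * aT t * aR t)
     has_real_derivative
      (2 * (alT / (2 * sqrt (al t))) * uT t * uR t + 2 * sqrt (al t) * uTT * uR t + 2 * sqrt (al t) * uT t * uTR)
      + (2 * (4 * uT t * (exp (4 * u t) / (4 * r^2))) * sqrt (al t) * aT t * aR t
         + 2 * (exp (4 * u t) / (4 * r^2)) * (alT / (2 * sqrt (al t))) * aT t * aR t
         + 2 * (exp (4 * u t) / (4 * r^2)) * sqrt (al t) * aTT * aR t
         + 2 * (exp (4 * u t) / (4 * r^2)) * sqrt (al t) * aT t * aTR)) (at t)"
proof -
  note s = sqrt_der[OF al pos]
  have E: "((\<lambda>t. exp (4 * u t) / (4 * r^2)) has_real_derivative exp (4 * u t) * (4 * uT t) / (4 * r^2)) (at t)"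
    by (rule DERIV_cdivide[OF exp_der[OF DERIV_cmult[OF u]]])
  note P1 = DERIV_mult[OF DERIV_mult[OF DERIV_cmult[OF s, of 2] uT] uR]
  note P2 = DERIV_mult[OF DERIV_mult[OF DERIV_mult[OF DERIV_cmult[OF E, of 2] s] aT] aR]
  show ?thesis
    by (rule DERIV_eqI[OF DERIV_add[OF P1 P2]]) (simp add: algebra_simps)
qed

lemma Ck_mono: "T \<subseteq> S \<Longrightarrow> Ck k S f \<Longrightarrow> Ck k T f"
  by (induction k arbitrary: f) (auto intro: continuous_on_subset)

lemma smooth_mono: "T \<subseteq> S \<Longrightarrow> smooth_on2 S f \<Longrightarrow> smooth_on2 T f"
  unfolding smooth_on2_def using Ck_mono by blast

lemma smooth_dth: "smooth_on2 S f \<Longrightarrow> smooth_on2 S (dth f)"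
  unfolding smooth_on2_def by (metis Ck.simps(2))

lemma smooth_dR: "smooth_on2 S f \<Longrightarrow> smooth_on2 S (dR f)"
  unfolding smooth_on2_def by (metis Ck.simps(2))

lemma smooth_cont: "smooth_on2 S f \<Longrightarrow> continuous_on S (\<lambda>p. f (fst p) (snd p))"
  unfolding smooth_on2_def by (metis Ck.simps(1))

lemma smooth_cont_comp:
  assumes "smooth_on2 S f" "continuous_on T h1" "continuous_on T h2" "\<And>x. x \<in> T \<Longrightarrow> (h1 x, h2 x) \<in> S"
  shows "continuous_on T (\<lambda>x. f (h1 x) (h2 x))"
proof -
  have "continuous_on T (\<lambda>x. (\<lambda>p. f (fst p) (snd p)) (h1 x, h2 x))"
    by (rule continuous_on_compose2[OF smooth_cont[OF assms(1)]])
       (use assms in \<open>auto intro!: continuous_intros\<close>)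
  then show ?thesis by simp
qed

lemma smooth_derR:
  assumes "smooth_on2 S f" "(t, r) \<in> S"
  shows "((\<lambda>r. f t r) has_real_derivative dR f t r) (at r)"
proof -
  have "Ck 1 S f" using assms(1) unfolding smooth_on2_def by blast
  then have "(\<lambda>r. f t r) differentiable (at r)" using assms(2) by fastforce
  then show ?thesis unfolding dR_def by (simp add: DERIV_deriv_iff_real_differentiable)
qed

lemma smooth_derT:
  assumes "smooth_on2 S f" "(t, r) \<in> S"
  shows "((\<lambda>t. f t r) has_real_derivative dth f t r) (at t)"
proof -
  have "Ck 1 S f" using assms(1) unfolding smooth_on2_def by blast
  then have "(\<lambda>t. f t r) differentiable (at t)" using assms(2) by fastforce
  then show ?thesis unfolding dth_def by (simp add: DERIV_deriv_iff_real_differentiable)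
qed

lemma schwarz:
  assumes W: "open W" and g: "smooth_on2 W g" and p: "(t0, r0) \<in> W"
  shows "dR (dth g) t0 r0 = dth (dR g) t0 r0"
proof -
  obtain e where e: "e > 0" "cball (t0, r0) e \<subseteq> W" using W p open_contains_cball by blast
  define d where "d = e / 2"
  have d: "d > 0" using e by (simp add: d_def)
  have box: "(t, r) \<in> W" if "\<bar>t - t0\<bar> \<le> d" "\<bar>r - r0\<bar> \<le> d" for t r
  proof -
    have "dist (t0, r0) (t, r) \<le> \<bar>t - t0\<bar> + \<bar>r - r0\<bar>"
      unfolding dist_Pair_Pair dist_real_def using sqrt_sum_squares_le_sum_abs[of "t0 - t" "r0 - r"]
      by (simp add: abs_minus_commute)
    also have "\<dots> \<le> e" using that by (simp add: d_def)
    finally show ?thesis using e(2) by (auto simp: subset_iff)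
  qed
  define a where "a = t0 - d"
  define b where "b = t0 + d"
  define I where "I = {r0 - d .. r0 + d}"
  note gT = smooth_dth[OF g] and gR = smooth_dR[OF g]
  note gRT = smooth_dR[OF gT] and gTR = smooth_dth[OF gR]
  have sub: "(s, r) \<in> W" if "s \<in> {a..b}" "r \<in> I" for s r
    using box that by (auto simp: a_def b_def I_def abs_le_iff)
  have r0I: "r0 \<in> I" and intI: "r0 \<in> interior I" using d by (auto simp: I_def)
  have claim1: "integral {a..t} (\<lambda>s. dR (dth g) s r0) = dR g t r0 - dR g a r0" if t: "t \<in> {a..b}" for t
  proof -
    have sub': "(s, r) \<in> W" if "s \<in> {a..t}" "r \<in> I" for s r
      using sub that t by auto
    have Phi: "integral {a..t} (\<lambda>s. dth g s r) = g t r - g a r" if r: "r \<in> I" for r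
    proof -
      have "((\<lambda>s. dth g s r) has_integral (g t r - g a r)) {a..t}"
      proof (rule fundamental_theorem_of_calculus)
        show "a \<le> t" using t by simp
      next
        fix x assume x: "x \<in> {a..t}"
        have "((\<lambda>s. g s r) has_real_derivative dth g x r) (at x)"
          using smooth_derT[OF g sub'[OF x r]] .
        then show "((\<lambda>s. g s r) has_vector_derivative dth g x r) (at x within {a..t})"
          by (simp add: has_real_derivative_iff_has_vector_derivative has_vector_derivative_at_within)
      qed
      then show ?thesis by (rule integral_unique)
    qed
    have L: "((\<lambda>x. integral (cbox a t) (\<lambda>s. dth g s x)) has_field_derivative
              integral (cbox a t) (\<lambda>s. dR (dth g) s r0)) (at r0 within I)"
    proof (rule leibniz_rule_field_derivative)
      fix x s assume x: "x \<in> I" and s: "s \<in> cbox a t"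
      show "((\<lambda>x. dth g s x) has_field_derivative dR (dth g) s x) (at x within I)"
        using smooth_derR[OF gT sub'] x s by (auto intro: has_field_derivative_at_within)
    next
      fix x assume x: "x \<in> I"
      show "(\<lambda>s. dth g s x) integrable_on cbox a t"
        unfolding box_real
        by (rule integrable_continuous_interval, rule smooth_cont_comp[OF gT])
           (use x sub' in \<open>auto intro!: continuous_intros\<close>)
    next
      have "continuous_on (I \<times> cbox a t) (\<lambda>p. dR (dth g) (snd p) (fst p))"
        by (rule smooth_cont_comp[OF gRT]) (use sub' in \<open>auto intro!: continuous_intros\<close>)
      then show "continuous_on (I \<times> cbox a t) (\<lambda>(x, s). dR (dth g) s x)"
        by (simp add: case_prod_beta')
    next
      show "r0 \<in> I" by (rule r0I)
      show "convex I" by (simp add: I_def)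
    qed
    then have L': "((\<lambda>x. integral {a..t} (\<lambda>s. dth g s x)) has_field_derivative
              integral {a..t} (\<lambda>s. dR (dth g) s r0)) (at r0)"
      using at_within_interior[OF intI] by (simp add: box_real)
    have L3: "((\<lambda>x. g t x - g a x) has_field_derivative integral {a..t} (\<lambda>s. dR (dth g) s r0)) (at r0)"
      by (rule has_field_derivative_transform_within_open[OF L', of "{r0 - d<..<r0 + d}"])
         (use d in \<open>auto simp: Phi I_def\<close>)
    have L2: "((\<lambda>x. g t x - g a x) has_field_derivative dR g t r0 - dR g a r0) (at r0)"
      by (rule DERIV_diff[OF smooth_derR[OF g] smooth_derR[OF g]]) (use sub r0I t d in \<open>auto simp: a_def b_def\<close>)
    show ?thesis using DERIV_unique[OF L3 L2] .
  qed
  have cont: "continuous_on {a..b} (\<lambda>s. dR (dth g) s r0)"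
    by (rule smooth_cont_comp[OF gRT]) (use sub r0I in \<open>auto intro!: continuous_intros\<close>)
  have t0: "t0 \<in> {a..b}" "t0 \<in> interior {a..b}" using d by (auto simp: a_def b_def)
  have M: "((\<lambda>t. integral {a..t} (\<lambda>s. dR (dth g) s r0)) has_real_derivative dR (dth g) t0 r0) (at t0)"
    using integral_has_real_derivative[OF cont t0(1)] at_within_interior[OF t0(2)] by simp
  have M3: "((\<lambda>t. dR g t r0 - dR g a r0) has_real_derivative dR (dth g) t0 r0) (at t0)"
    by (rule has_field_derivative_transform_within_open[OF M, of "{a<..<b}"])
       (use t0 in \<open>auto simp: claim1\<close>)
  have M2: "((\<lambda>t. dR g t r0 - dR g a r0) has_real_derivative dth (dR g) t0 r0 - 0) (at t0)"
    by (rule DERIV_diff[OF smooth_derT[OF gR] DERIV_const]) (use p in auto)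
  show ?thesis using DERIV_unique[OF M3 M2] by simp
qed

lemma deriv_unique_S:
  fixes a b x :: real
  assumes "(f has_real_derivative D1) (at x within {a<..b})" "(f has_real_derivative D2) (at x within {a<..b})"
    "a < x" "x \<le> b"
  shows "D1 = D2"
proof -
  have "at x within {a<..b} \<noteq> bot"
    using assms(3,4) by (simp add: trivial_limit_within)
  then show ?thesis
    using vector_derivative_unique_within assms(1,2)
    by (metis has_real_derivative_iff_has_vector_derivative)
qed

lemma endpoint_eq:
  fixes a b :: real and f g :: "real \<Rightarrow> real"
  assumes "a < b" "continuous_on {a<..b} f" "continuous_on {a<..b} g" "\<And>x. a < x \<Longrightarrow> x < b \<Longrightarrow> f x = g x"
  shows "f b = g b"
proof -
  define c where "c = (a + b) / 2"
  have cb: "c < b" "a < c" using assms(1) by (auto simp: c_def)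
  have "continuous_on (closure {c<..<b}) (\<lambda>x. f x - g x)"
    using cb by (auto intro!: continuous_intros intro: continuous_on_subset[OF assms(2)] continuous_on_subset[OF assms(3)])
  then have "f b - g b = 0"
    by (rule continuous_constant_on_closure) (use cb assms(4) in auto)
  then show ?thesis by simp
qed

lemma mono_final:
  fixes Rs Ri Rk :: real and E E' :: "real \<Rightarrow> real"
  assumes d: "\<And>x. x \<in> {Rs<..Ri} \<Longrightarrow> (E has_real_derivative E' x) (at x within {Rs<..Ri})"
    and ineq: "\<And>x. x \<in> {Rs<..Ri} \<Longrightarrow> - (4 / x * E x) \<le> E' x"
    and pos: "0 < Rs" and k: "Rk \<in> {Rs<..Ri}"
  shows "E Rk \<le> E Ri * (Ri / Rk) ^ 4"
proof -
  define G where "G x = x ^ 4 * E x" for x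
  have dG: "(G has_real_derivative (4 * x ^ 3 * E x + x ^ 4 * E' x)) (at x within {Rs<..Ri})" if x: "x \<in> {Rs<..Ri}" for x
    unfolding G_def using DERIV_mult[OF DERIV_pow[of 4 x] d[OF x]] by (simp add: algebra_simps)
  have nn: "0 \<le> 4 * x ^ 3 * E x + x ^ 4 * E' x" if x: "x \<in> {Rs<..Ri}" for x
  proof -
    have xp: "x > 0" using x pos by simp
    have "x ^ 4 * (- (4 / x * E x)) \<le> x ^ 4 * E' x"
      by (rule mult_left_mono[OF ineq[OF x]]) (use xp in simp)
    moreover have "x ^ 4 * (- (4 / x * E x)) = - (4 * x ^ 3 * E x)"
      using xp by (simp add: field_simps eval_nat_numeral)
    ultimately show ?thesis by linarith
  qed
  have "\<exists>y\<in>{Rk..Ri}. G Ri - G Rk = (\<lambda>h. h * (4 * y ^ 3 * E y + y ^ 4 * E' y)) (Ri - Rk)"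
  proof (rule mvt_very_simple)
    show "Rk \<le> Ri" using k by simp
  next
    fix y assume y: "Rk \<le> y" "y \<le> Ri"
    have yS: "y \<in> {Rs<..Ri}" using y k by auto
    have "(G has_real_derivative (4 * y ^ 3 * E y + y ^ 4 * E' y)) (at y within {Rk..Ri})"
      by (rule DERIV_subset[OF dG[OF yS]]) (use k in auto)
    then show "(G has_derivative (\<lambda>h. h * (4 * y ^ 3 * E y + y ^ 4 * E' y))) (at y within {Rk..Ri})"
      by (simp add: has_field_derivative_def mult_commute_abs)
  qed
  then obtain y where y: "y \<in> {Rk..Ri}" and eq: "G Ri - G Rk = (Ri - Rk) * (4 * y ^ 3 * E y + y ^ 4 * E' y)"
    by auto
  have yS: "y \<in> {Rs<..Ri}" using y k by auto
  have "0 \<le> (Ri - Rk) * (4 * y ^ 3 * E y + y ^ 4 * E' y)"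
    using nn[OF yS] k by (intro mult_nonneg_nonneg) auto
  then have "G Rk \<le> G Ri" using eq by linarith
  then have "Rk ^ 4 * E Rk \<le> Ri ^ 4 * E Ri" by (simp add: G_def)
  moreover have rk: "Rk > 0" using k pos by simp
  ultimately show ?thesis
    by (simp add: field_simps power_divide)
qed

lemma per_dth:
  assumes g: "smooth_on2 W g" and sub: "UNIV \<times> S \<subseteq> W"
    and per: "\<And>t. g (t + 1) r = g t r" and r: "r \<in> S"
  shows "dth g (t + 1) r = dth g t r"
proof -
  have A: "((\<lambda>s. g s r) has_real_derivative dth g (t + 1) r) (at (t + 1))"
    by (rule smooth_derT[OF g]) (use sub r in auto)
  then have "((\<lambda>s. g (s + 1) r) has_real_derivative dth g (t + 1) r) (at t)"
    by (simp add: DERIV_shift)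
  then have A': "((\<lambda>s. g s r) has_real_derivative dth g (t + 1) r) (at t)"
    by (simp add: per)
  have B: "((\<lambda>s. g s r) has_real_derivative dth g t r) (at t)"
    by (rule smooth_derT[OF g]) (use sub r in auto)
  show ?thesis using DERIV_unique[OF A' B] .
qed

lemma per_dR:
  fixes a b :: real
  assumes g: "smooth_on2 W g" and sub: "UNIV \<times> {a<..b} \<subseteq> W"
    and per: "\<And>r. r \<in> {a<..b} \<Longrightarrow> g (t + 1) r = g t r" and r: "r \<in> {a<..b}"
  shows "dR g (t + 1) r = dR g t r"
proof -
  have A: "((\<lambda>s. g (t + 1) s) has_real_derivative dR g (t + 1) r) (at r within {a<..b})"
    by (rule has_field_derivative_at_within, rule smooth_derR[OF g]) (use sub r in auto)
  have A': "((\<lambda>s. g t s) has_real_derivative dR g (t + 1) r) (at r within {a<..b})"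
    by (rule has_field_derivative_transform_within[OF A, of 1]) (use r per in auto)
  have B: "((\<lambda>s. g t s) has_real_derivative dR g t r) (at r within {a<..b})"
    by (rule has_field_derivative_at_within, rule smooth_derR[OF g]) (use sub r in auto)
  show ?thesis by (rule deriv_unique_S[OF A' B]) (use r in auto)
qed

lemma target_ineq:
  fixes s x E B K uR uT aR aT :: real
  assumes s: "s > 0" and x: "x > 0" and E: "E > 0" and B: "B > 0"
  shows "0 \<le> B * K\<^sup>2 / (s * x ^ 5) + 2 * uR\<^sup>2 / (s * x) + s * E * aT\<^sup>2 / (2 * x ^ 3)"
    and "B * K\<^sup>2 / (s * x ^ 5) + 2 * uR\<^sup>2 / (s * x) + s * E * aT\<^sup>2 / (2 * x ^ 3)
         \<le> 4 / x * ((uR\<^sup>2 / s + s * uT\<^sup>2 + E / (4 * x\<^sup>2) * (aR\<^sup>2 / s + s * aT\<^sup>2))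
                    + B * K\<^sup>2 / (4 * s * x ^ 4))"
proof -
  show "0 \<le> B * K\<^sup>2 / (s * x ^ 5) + 2 * uR\<^sup>2 / (s * x) + s * E * aT\<^sup>2 / (2 * x ^ 3)"
    using s x E B by (intro add_nonneg_nonneg) auto
  have eq: "4 / x * ((uR\<^sup>2 / s + s * uT\<^sup>2 + E / (4 * x\<^sup>2) * (aR\<^sup>2 / s + s * aT\<^sup>2))
                    + B * K\<^sup>2 / (4 * s * x ^ 4))
     - (B * K\<^sup>2 / (s * x ^ 5) + 2 * uR\<^sup>2 / (s * x) + s * E * aT\<^sup>2 / (2 * x ^ 3))
     = 2 * uR\<^sup>2 / (s * x) + 4 * s * uT\<^sup>2 / x + E * aR\<^sup>2 / (s * x ^ 3) + s * E * aT\<^sup>2 / (2 * x ^ 3)"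
    using s x by (simp add: field_simps eval_nat_numeral)
  have "0 \<le> 2 * uR\<^sup>2 / (s * x) + 4 * s * uT\<^sup>2 / x + E * aR\<^sup>2 / (s * x ^ 3) + s * E * aT\<^sup>2 / (2 * x ^ 3)"
    using s x E by (intro add_nonneg_nonneg) auto
  then show "B * K\<^sup>2 / (s * x ^ 5) + 2 * uR\<^sup>2 / (s * x) + s * E * aT\<^sup>2 / (2 * x ^ 3)
         \<le> 4 / x * ((uR\<^sup>2 / s + s * uT\<^sup>2 + E / (4 * x\<^sup>2) * (aR\<^sup>2 / s + s * aT\<^sup>2))
                    + B * K\<^sup>2 / (4 * s * x ^ 4))"
    using eq by linarith
qed



theorem mainTheorem5:
  fixes Rs Ri K :: real and \<alpha> \<nu> \<beta> U A G H :: "real \<Rightarrow> real \<Rightarrow> real"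
  assumes "T2_vacuum Rs Ri K \<alpha> \<nu> \<beta> U A G H"
  shows "(\<forall>R\<in>{Rs<..Ri}.
            (modified_energy \<alpha> \<beta> U A K has_real_derivative
               - integral {0..1} (\<lambda>\<theta>. exp (2 * \<beta> \<theta> R) * K\<^sup>2 / (sqrt (\<alpha> \<theta> R) * R ^ 5)
                   + 2 * (dR U \<theta> R)\<^sup>2 / (sqrt (\<alpha> \<theta> R) * R)
                   + sqrt (\<alpha> \<theta> R) * exp (4 * U \<theta> R) * (dth A \<theta> R)\<^sup>2 / (2 * R ^ 3)))
              (at R within {Rs<..Ri})
          \<and> - integral {0..1} (\<lambda>\<theta>. exp (2 * \<beta> \<theta> R) * K\<^sup>2 / (sqrt (\<alpha> \<theta> R) * R ^ 5)
                   + 2 * (dR U \<theta> R)\<^sup>2 / (sqrt (\<alpha> \<theta> R) * R)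
                   + sqrt (\<alpha> \<theta> R) * exp (4 * U \<theta> R) * (dth A \<theta> R)\<^sup>2 / (2 * R ^ 3)) \<le> 0)
       \<and> (\<forall>Rk\<in>{Rs<..Ri}. modified_energy \<alpha> \<beta> U A K Rk
                          \<le> modified_energy \<alpha> \<beta> U A K Ri * (Ri / Rk) ^ 4)"
proof -
  define S where "S = {Rs<..Ri}"
  note H = assms[unfolded T2_vacuum_def]
  have pos: "0 < Rs" "Rs < Ri" "0 \<le> K" using H by auto
  have spa: "smooth_periodic Rs Ri \<alpha>" and spn: "smooth_periodic Rs Ri \<nu>"
    and spu: "smooth_periodic Rs Ri U" and spA: "smooth_periodic Rs Ri A" using H by auto
  obtain Wa where Wa: "open Wa" "UNIV \<times> S \<subseteq> Wa" "smooth_on2 Wa \<alpha>"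
    using spa unfolding smooth_periodic_def S_def by blast
  have pera: "\<And>t r. r \<in> S \<Longrightarrow> \<alpha> (t + 1) r = \<alpha> t r"
    using spa unfolding smooth_periodic_def S_def by blast
  obtain Wn where Wn: "open Wn" "UNIV \<times> S \<subseteq> Wn" "smooth_on2 Wn \<nu>"
    using spn unfolding smooth_periodic_def S_def by blast
  obtain Wu where Wu: "open Wu" "UNIV \<times> S \<subseteq> Wu" "smooth_on2 Wu U"
    using spu unfolding smooth_periodic_def S_def by blast
  have peru: "\<And>t r. r \<in> S \<Longrightarrow> U (t + 1) r = U t r"
    using spu unfolding smooth_periodic_def S_def by blast
  obtain Wc where Wc: "open Wc" "UNIV \<times> S \<subseteq> Wc" "smooth_on2 Wc A"
    using spA unfolding smooth_periodic_def S_def by blast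
  have perA: "\<And>t r. r \<in> S \<Longrightarrow> A (t + 1) r = A t r"
    using spA unfolding smooth_periodic_def S_def by blast
  define W where "W = Wa \<inter> Wn \<inter> Wu \<inter> Wc"
  have W: "open W" "UNIV \<times> S \<subseteq> W" using Wa Wn Wu Wc by (auto simp: W_def)
  have sa: "smooth_on2 W \<alpha>" by (rule smooth_mono[OF _ Wa(3)]) (auto simp: W_def)
  have sn: "smooth_on2 W \<nu>" by (rule smooth_mono[OF _ Wn(3)]) (auto simp: W_def)
  have su: "smooth_on2 W U" by (rule smooth_mono[OF _ Wu(3)]) (auto simp: W_def)
  have sA: "smooth_on2 W A" by (rule smooth_mono[OF _ Wc(3)]) (auto simp: W_def)
  note saT = smooth_dth[OF sa] and saR = smooth_dR[OF sa] and snR = smooth_dR[OF sn]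
  note suT = smooth_dth[OF su] and suR = smooth_dR[OF su]
  note suTT = smooth_dth[OF suT] and suRT = smooth_dR[OF suT] and suTR = smooth_dth[OF suR] and suRR = smooth_dR[OF suR]
  note sAT = smooth_dth[OF sA] and sAR = smooth_dR[OF sA]
  note sATT = smooth_dth[OF sAT] and sART = smooth_dR[OF sAT] and sATR = smooth_dth[OF sAR] and sARR = smooth_dR[OF sAR]
  have inW: "\<And>t x. x \<in> S \<Longrightarrow> (t, x) \<in> W" using W by auto
  have xpos: "\<And>x. x \<in> S \<Longrightarrow> 0 < x" using pos by (auto simp: S_def)
  have PP: "\<And>t x. x \<in> S \<Longrightarrow>
        0 < \<alpha> t x \<and>
        \<beta> t x = \<nu> t x + ln (\<alpha> t x) / 2 \<and>
        dR \<beta> t x = sqrt (\<alpha> t x) * x * hdens \<alpha> U A t x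
                      - exp (2 * \<beta> t x) * K\<^sup>2 / (4 * x ^ 3) \<and>
        dR \<alpha> t x = - \<alpha> t x * exp (2 * \<beta> t x) * K\<^sup>2 / x ^ 3 \<and>
        dR (dR U) t x - \<alpha> t x * dth (dth U) t x =
          - dR U t x / x + dR \<alpha> t x * dR U t x / (2 * \<alpha> t x)
          + dth \<alpha> t x * dth U t x / 2
          + exp (4 * U t x) / (2 * x\<^sup>2) * ((dR A t x)\<^sup>2 - \<alpha> t x * (dth A t x)\<^sup>2) \<and>
        dR (dR A) t x - \<alpha> t x * dth (dth A) t x =
          dR A t x / x + dR \<alpha> t x * dR A t x / (2 * \<alpha> t x)
          + dth \<alpha> t x * dth A t x / 2
          - 4 * dR A t x * dR U t x + 4 * \<alpha> t x * dth A t x * dth U t x"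
  proof -
    fix t x assume "x \<in> S"
    then have "x \<in> {Rs<..Ri}" by (simp add: S_def)
    then show "?thesis t x" using H by blast
  qed
  have apos: "\<And>t x. x \<in> S \<Longrightarrow> 0 < \<alpha> t x" using PP by blast
  have anz: "\<And>t x. x \<in> S \<Longrightarrow> \<alpha> t x \<noteq> 0" by (metis apos less_irrefl)
  have snz: "\<And>t x. x \<in> S \<Longrightarrow> sqrt (\<alpha> t x) \<noteq> 0" by (metis apos real_sqrt_gt_zero less_irrefl)
  have xnz: "\<And>x. x \<in> S \<Longrightarrow> x \<noteq> 0" by (metis xpos less_irrefl)
  have beq: "\<And>t x. x \<in> S \<Longrightarrow> \<beta> t x = \<nu> t x + ln (\<alpha> t x) / 2" using PP by blast
  have dr: "\<And>g t x X. smooth_on2 W g \<Longrightarrow> x \<in> S \<Longrightarrow> ((\<lambda>r. g t r) has_real_derivative dR g t x) (at x within X)"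
    using smooth_derR inW by (blast intro: has_field_derivative_at_within)
  have dt: "\<And>g t x. smooth_on2 W g \<Longrightarrow> x \<in> S \<Longrightarrow> ((\<lambda>s. g s x) has_real_derivative dth g t x) (at t)"
    using smooth_derT inW by blast
  have swU: "\<And>t x. x \<in> S \<Longrightarrow> dR (dth U) t x = dth (dR U) t x"
    using schwarz[OF W(1) su] inW by blast
  have swA: "\<And>t x. x \<in> S \<Longrightarrow> dR (dth A) t x = dth (dR A) t x"
    using schwarz[OF W(1) sA] inW by blast
  have cS: "\<And>g (T :: ('z::topological_space) set) h1 h2. smooth_on2 W g \<Longrightarrow> continuous_on T h1 \<Longrightarrow> continuous_on T h2
      \<Longrightarrow> (\<And>y. y \<in> T \<Longrightarrow> h2 y \<in> S) \<Longrightarrow> continuous_on T (\<lambda>y. g (h1 y) (h2 y))"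
    by (rule smooth_cont_comp) (use inW in auto)
  define bb where "bb t x = \<nu> t x + ln (\<alpha> t x) / 2" for t x
  define Q where "Q t x = dR \<nu> t x + dR \<alpha> t x / (2 * \<alpha> t x)" for t x
  have bbd: "((\<lambda>r. bb t r) has_real_derivative Q t x) (at x)" if x: "x \<in> S" for t x
  proof -
    have l: "((\<lambda>r. ln (\<alpha> t r)) has_real_derivative inverse (\<alpha> t x) * dR \<alpha> t x) (at x)"
      by (rule DERIV_chain2[OF DERIV_ln dr[OF sa x]]) (rule apos[OF x])
    show ?thesis unfolding bb_def
      by (rule DERIV_eqI[OF DERIV_add[OF dr[OF sn x] DERIV_cdivide[OF l, of 2]]])
         (use apos[OF x] in \<open>simp add: Q_def field_simps\<close>)
  qed
  have bder: "((\<lambda>r. \<beta> t r) has_real_derivative Q t x) (at x within S)" if x: "x \<in> S" for t x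
    by (rule has_field_derivative_transform_within[OF has_field_derivative_at_within[OF bbd[OF x]], of 1])
       (use x beq in \<open>auto simp: bb_def\<close>)
  define RHS where "RHS t x = sqrt (\<alpha> t x) * x * hdens \<alpha> U A t x - exp (2 * bb t x) * K\<^sup>2 / (4 * x ^ 3)" for t x
  have Qeq: "Q t x = dR \<beta> t x" if x: "x \<in> S" for t x
  proof -
    have int: "Q t y = dR \<beta> t y" if y: "Rs < y" "y < Ri" for y
    proof -
      have "((\<lambda>r. \<beta> t r) has_real_derivative Q t y) (at y)"
        by (rule has_field_derivative_transform_within_open[OF bbd[of y t], where S="{Rs<..<Ri}"])
           (use y beq in \<open>auto simp: S_def bb_def\<close>)
      then show ?thesis unfolding dR_def by (simp add: DERIV_imp_deriv)
    qed
    have rhs: "dR \<beta> t y = RHS t y" if y: "y \<in> S" for y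
      using PP[OF y] beq[OF y] by (simp add: RHS_def bb_def)
    show ?thesis
    proof (cases "x < Ri")
      case True then show ?thesis using int x by (auto simp: S_def)
    next
      case False
      then have xR: "x = Ri" using x by (auto simp: S_def)
      have "Q t Ri = RHS t Ri"
      proof (rule endpoint_eq[OF pos(2)])
        show "continuous_on {Rs<..Ri} (Q t)"
          unfolding Q_def S_def[symmetric]
          by (intro continuous_intros cS[OF snR] cS[OF saR] cS[OF sa]) (auto simp: anz snz xnz)
        show "continuous_on {Rs<..Ri} (RHS t)"
          unfolding RHS_def hdens_def bb_def S_def[symmetric]
          by (intro continuous_intros cS[OF sa] cS[OF sn] cS[OF su] cS[OF suR] cS[OF suT] cS[OF sAR] cS[OF sAT])
             (auto simp: anz snz xnz)
        fix y assume "Rs < y" "y < Ri"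
        then show "Q t y = RHS t y" using int rhs by (auto simp: S_def)
      qed
      then show ?thesis using rhs x xR by simp
    qed
  qed
  have sq: "\<And>t x. x \<in> S \<Longrightarrow> (sqrt (\<alpha> t x))\<^sup>2 = \<alpha> t x"
    using apos by (simp add: less_imp_le)
  have spos: "\<And>t x. x \<in> S \<Longrightarrow> 0 < sqrt (\<alpha> t x)" using apos by simp
  have eb: "\<And>t x. x \<in> S \<Longrightarrow> exp (2 * \<beta> t x) = exp (2 * bb t x)" using beq by (simp add: bb_def)
  define F where "F t x = hdens \<alpha> U A t x + exp (2 * \<beta> t x) * K\<^sup>2 / (4 * sqrt (\<alpha> t x) * x ^ 4)" for t x
  define FR where "FR t x =
    ((2 * dR U t x * dR (dR U) t x / sqrt (\<alpha> t x) - (dR U t x)^2 * (dR \<alpha> t x / (2 * sqrt (\<alpha> t x))) / (sqrt (\<alpha> t x))^2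
      + (dR \<alpha> t x / (2 * sqrt (\<alpha> t x))) * (dth U t x)^2 + 2 * sqrt (\<alpha> t x) * dth U t x * dth (dR U) t x)
    + (exp (4 * U t x) / (4 * x^2) * (4 * dR U t x - 2 / x) * ((dR A t x)^2 / sqrt (\<alpha> t x) + sqrt (\<alpha> t x) * (dth A t x)^2)
      + exp (4 * U t x) / (4 * x^2) * (2 * dR A t x * dR (dR A) t x / sqrt (\<alpha> t x)
          - (dR A t x)^2 * (dR \<alpha> t x / (2 * sqrt (\<alpha> t x))) / (sqrt (\<alpha> t x))^2
          + (dR \<alpha> t x / (2 * sqrt (\<alpha> t x))) * (dth A t x)^2 + 2 * sqrt (\<alpha> t x) * dth A t x * dth (dR A) t x))
    + K^2 / 4 * (2 * Q t x * exp (2 * \<beta> t x) / (sqrt (\<alpha> t x) * x^4)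
          - exp (2 * \<beta> t x) * (dR \<alpha> t x / (2 * sqrt (\<alpha> t x))) / ((sqrt (\<alpha> t x))^2 * x^4)
          - 4 * exp (2 * \<beta> t x) / (sqrt (\<alpha> t x) * x^5)))" for t x
  define target where "target t x = exp (2 * \<beta> t x) * K\<^sup>2 / (sqrt (\<alpha> t x) * x ^ 5)
                   + 2 * (dR U t x)\<^sup>2 / (sqrt (\<alpha> t x) * x)
                   + sqrt (\<alpha> t x) * exp (4 * U t x) * (dth A t x)\<^sup>2 / (2 * x ^ 3)" for t x
  define D where "D t x = 2 * sqrt (\<alpha> t x) * dth U t x * dR U t x
      + 2 * (exp (4 * U t x) / (4 * x^2)) * sqrt (\<alpha> t x) * dth A t x * dR A t x" for t x
  define DT where "DT t x =
      (2 * (dth \<alpha> t x / (2 * sqrt (\<alpha> t x))) * dth U t x * dR U t x + 2 * sqrt (\<alpha> t x) * dth (dth U) t x * dR U t x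
        + 2 * sqrt (\<alpha> t x) * dth U t x * dth (dR U) t x)
      + (2 * (4 * dth U t x * (exp (4 * U t x) / (4 * x^2))) * sqrt (\<alpha> t x) * dth A t x * dR A t x
         + 2 * (exp (4 * U t x) / (4 * x^2)) * (dth \<alpha> t x / (2 * sqrt (\<alpha> t x))) * dth A t x * dR A t x
         + 2 * (exp (4 * U t x) / (4 * x^2)) * sqrt (\<alpha> t x) * dth (dth A) t x * dR A t x
         + 2 * (exp (4 * U t x) / (4 * x^2)) * sqrt (\<alpha> t x) * dth A t x * dth (dR A) t x)" for t x
  have ident: "FR t x + target t x = DT t x" if x: "x \<in> S" for t x
    unfolding FR_def target_def DT_def
    by (rule alg_core[where h = "hdens \<alpha> U A t x"])
       (use PP[OF x] Qeq[OF x] spos[OF x] xpos[OF x] sq[OF x] in \<open>simp_all add: hdens_def\<close>)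
  have Fderiv: "((\<lambda>r. F t r) has_real_derivative FR t x) (at x within S)" if x: "x \<in> S" for t x
  proof -
    note d1 = d_T1[OF dr[OF sa x, of t] dr[OF suR x, of t] apos[OF x]]
    note d2 = d_T2[OF dr[OF sa x, of t] dr[OF suT x, of t] apos[OF x]]
    note d3 = d_T3[OF dr[OF sa x, of t] dr[OF su x, of t] dr[OF sAR x, of t] dr[OF sAT x, of t] apos[OF x] xpos[OF x]]
    note d4 = d_T4[OF dr[OF sa x, of t] bder[of x t, OF x] apos[OF x] xpos[OF x], of K]
    note dd = DERIV_add[OF DERIV_add[OF DERIV_add[OF d1 d2] d3] d4]
    show ?thesis
      unfolding F_def hdens_def
      by (rule DERIV_eqI[OF DERIV_add[OF DERIV_add[OF DERIV_add[OF d1 d2] d3] d4]])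
         (simp add: FR_def swU[OF x] swA[OF x] algebra_simps)
  qed
  have cT1: "continuous_on {0..1} (\<lambda>t. hdens \<alpha> U A t x)" if x: "x \<in> S" for x
    unfolding hdens_def
    by (intro continuous_intros cS[OF sa] cS[OF su] cS[OF suR] cS[OF suT] cS[OF sAR] cS[OF sAT])
       (use x in \<open>auto simp: anz snz xnz\<close>)
  have cT2: "continuous_on {0..1} (\<lambda>t. exp (2 * \<beta> t x) * K\<^sup>2 / (4 * sqrt (\<alpha> t x) * x ^ 4))" if x: "x \<in> S" for x
  proof -
    have "continuous_on {0..1} (\<lambda>t. exp (2 * bb t x) * K\<^sup>2 / (4 * sqrt (\<alpha> t x) * x ^ 4))"
      unfolding bb_def
      by (intro continuous_intros cS[OF sa] cS[OF sn]) (use x in \<open>auto simp: anz snz xnz\<close>)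
    then show ?thesis by (rule continuous_on_eq) (use x eb in auto)
  qed
  have cT3: "continuous_on {0..1} (\<lambda>t. target t x)" if x: "x \<in> S" for x
  proof -
    have "continuous_on {0..1} (\<lambda>t. exp (2 * bb t x) * K\<^sup>2 / (sqrt (\<alpha> t x) * x ^ 5)
                   + 2 * (dR U t x)\<^sup>2 / (sqrt (\<alpha> t x) * x)
                   + sqrt (\<alpha> t x) * exp (4 * U t x) * (dth A t x)\<^sup>2 / (2 * x ^ 3))"
      unfolding bb_def
      by (intro continuous_intros cS[OF sa] cS[OF sn] cS[OF su] cS[OF suR] cS[OF sAT])
         (use x in \<open>auto simp: anz snz xnz\<close>)
    then show ?thesis by (rule continuous_on_eq) (use x eb in \<open>auto simp: target_def\<close>)
  qed
  have Fint: "(\<lambda>t. F t x) integrable_on {0..1}" if x: "x \<in> S" for x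
    unfolding F_def by (intro integrable_add integrable_continuous_interval cT1 cT2 x)
  have ME: "modified_energy \<alpha> \<beta> U A K x = integral {0..1} (\<lambda>t. F t x)" if x: "x \<in> S" for x
    unfolding modified_energy_def energy_def F_def
    by (rule integral_add[symmetric]) (intro integrable_continuous_interval cT1 cT2 x)+
  have FRcont: "continuous_on (S \<times> cbox 0 1) (\<lambda>(x, t). FR t x)"
  proof -
    have "continuous_on (S \<times> cbox 0 1) (\<lambda>p. 
    ((2 * dR U (snd p) (fst p) * dR (dR U) (snd p) (fst p) / sqrt (\<alpha> (snd p) (fst p)) - (dR U (snd p) (fst p))^2 * (dR \<alpha> (snd p) (fst p) / (2 * sqrt (\<alpha> (snd p) (fst p)))) / (sqrt (\<alpha> (snd p) (fst p)))^2
      + (dR \<alpha> (snd p) (fst p) / (2 * sqrt (\<alpha> (snd p) (fst p)))) * (dth U (snd p) (fst p))^2 + 2 * sqrt (\<alpha> (snd p) (fst p)) * dth U (snd p) (fst p) * dth (dR U) (snd p) (fst p))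
    + (exp (4 * U (snd p) (fst p)) / (4 * (fst p)^2) * (4 * dR U (snd p) (fst p) - 2 / (fst p)) * ((dR A (snd p) (fst p))^2 / sqrt (\<alpha> (snd p) (fst p)) + sqrt (\<alpha> (snd p) (fst p)) * (dth A (snd p) (fst p))^2)
      + exp (4 * U (snd p) (fst p)) / (4 * (fst p)^2) * (2 * dR A (snd p) (fst p) * dR (dR A) (snd p) (fst p) / sqrt (\<alpha> (snd p) (fst p))
          - (dR A (snd p) (fst p))^2 * (dR \<alpha> (snd p) (fst p) / (2 * sqrt (\<alpha> (snd p) (fst p)))) / (sqrt (\<alpha> (snd p) (fst p)))^2
          + (dR \<alpha> (snd p) (fst p) / (2 * sqrt (\<alpha> (snd p) (fst p)))) * (dth A (snd p) (fst p))^2 + 2 * sqrt (\<alpha> (snd p) (fst p)) * dth A (snd p) (fst p) * dth (dR A) (snd p) (fst p)))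
    + K^2 / 4 * (2 * (dR \<nu> (snd p) (fst p) + dR \<alpha> (snd p) (fst p) / (2 * \<alpha> (snd p) (fst p))) * exp (2 * (\<nu> (snd p) (fst p) + ln (\<alpha> (snd p) (fst p)) / 2)) / (sqrt (\<alpha> (snd p) (fst p)) * (fst p)^4)
          - exp (2 * (\<nu> (snd p) (fst p) + ln (\<alpha> (snd p) (fst p)) / 2)) * (dR \<alpha> (snd p) (fst p) / (2 * sqrt (\<alpha> (snd p) (fst p)))) / ((sqrt (\<alpha> (snd p) (fst p)))^2 * (fst p)^4)
          - 4 * exp (2 * (\<nu> (snd p) (fst p) + ln (\<alpha> (snd p) (fst p)) / 2)) / (sqrt (\<alpha> (snd p) (fst p)) * (fst p)^5))))"
      by (intro continuous_intros cS[OF sa] cS[OF saR] cS[OF sn] cS[OF snR] cS[OF su] cS[OF suR] cS[OF suRR]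
            cS[OF suT] cS[OF suTR] cS[OF sA] cS[OF sAR] cS[OF sARR] cS[OF sAT] cS[OF sATR])
         (auto simp: anz snz xnz)
    then have "continuous_on (S \<times> cbox 0 1) (\<lambda>p. FR (snd p) (fst p))"
      by (rule continuous_on_eq) (auto simp: FR_def Q_def eb bb_def)
    then show ?thesis by (simp add: case_prod_beta')
  qed
  have LE: "((\<lambda>x. integral (cbox 0 1) (\<lambda>t. F t x)) has_field_derivative integral (cbox 0 1) (\<lambda>t. FR t R)) (at R within S)"
    if R: "R \<in> S" for R
  proof (rule leibniz_rule_field_derivative)
    fix x t assume "x \<in> S" "t \<in> cbox (0::real) 1"
    then show "((\<lambda>x. F t x) has_field_derivative FR t x) (at x within S)" using Fderiv by blast
  next
    fix x assume "x \<in> S"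
    then show "(\<lambda>t. F t x) integrable_on cbox 0 1" using Fint by (simp add: box_real)
  next
    show "continuous_on (S \<times> cbox 0 1) (\<lambda>(x, t). FR t x)" by (rule FRcont)
    show "R \<in> S" by (rule R)
    show "convex S" by (simp add: S_def)
  qed
  have Dder: "((\<lambda>t. D t R) has_real_derivative DT t R) (at t)" if R: "R \<in> S" for t R
    unfolding D_def DT_def
    by (rule d_D[where uT = "\<lambda>s. dth U s R", OF dt[OF sa R, of t] dt[OF su R, of t] dt[OF suT R, of t]
          dt[OF suR R, of t] dt[OF sAT R, of t] dt[OF sAR R, of t] apos[OF R]])
  have Dper: "D 1 R = D 0 R" if R: "R \<in> S" for R
  proof -
    have pS: "UNIV \<times> {Rs<..Ri} \<subseteq> W" using W(2) by (simp add: S_def)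
    have R': "R \<in> {Rs<..Ri}" using R by (simp add: S_def)
    have "\<alpha> (0 + 1) R = \<alpha> 0 R" "U (0 + 1) R = U 0 R" "A (0 + 1) R = A 0 R" using pera peru perA R by blast+
    moreover have "dth U (0 + 1) R = dth U 0 R" by (rule per_dth[OF su W(2) peru R]) (use R in auto)
    moreover have "dth A (0 + 1) R = dth A 0 R" by (rule per_dth[OF sA W(2) perA R]) (use R in auto)
    moreover have "dR U (0 + 1) R = dR U 0 R" by (rule per_dR[OF su pS _ R']) (use peru[where t=0] in \<open>auto simp: S_def\<close>)
    moreover have "dR A (0 + 1) R = dR A 0 R" by (rule per_dR[OF sA pS _ R']) (use perA[where t=0] in \<open>auto simp: S_def\<close>)
    ultimately show ?thesis by (simp add: D_def)
  qed
  have IntEq: "integral {0..1} (\<lambda>t. FR t R) = - integral {0..1} (\<lambda>t. target t R)" if R: "R \<in> S" for R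
  proof -
    have "((\<lambda>t. DT t R) has_integral (D 1 R - D 0 R)) {0..1}"
    proof (rule fundamental_theorem_of_calculus)
      fix t :: real assume "t \<in> {0..1}"
      show "((\<lambda>t. D t R) has_vector_derivative DT t R) (at t within {0..1})"
        using Dder[OF R, of t] by (simp add: has_real_derivative_iff_has_vector_derivative has_vector_derivative_at_within)
    qed simp
    then have I1: "((\<lambda>t. DT t R) has_integral 0) {0..1}" using Dper[OF R] by simp
    have I2: "((\<lambda>t. target t R) has_integral integral {0..1} (\<lambda>t. target t R)) {0..1}"
      by (intro integrable_integral integrable_continuous_interval cT3 R)
    have "((\<lambda>t. DT t R - target t R) has_integral (0 - integral {0..1} (\<lambda>t. target t R))) {0..1}"
      by (rule has_integral_diff[OF I1 I2])
    moreover have "(\<lambda>t. DT t R - target t R) = (\<lambda>t. FR t R)"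
      using ident[OF R] by (auto simp: algebra_simps)
    ultimately show ?thesis by (simp add: integral_unique)
  qed
  have Tnn: "0 \<le> target t x" and Tle: "target t x \<le> 4 / x * F t x" if x: "x \<in> S" for t x
    unfolding target_def F_def hdens_def
    by (rule target_ineq; use spos[OF x] xpos[OF x] in simp)+
  have part1: "(modified_energy \<alpha> \<beta> U A K has_real_derivative - integral {0..1} (\<lambda>t. target t R)) (at R within S)
      \<and> - integral {0..1} (\<lambda>t. target t R) \<le> 0" if R: "R \<in> S" for R
  proof
    have "((\<lambda>x. integral {0..1} (\<lambda>t. F t x)) has_field_derivative - integral {0..1} (\<lambda>t. target t R)) (at R within S)"
      using LE[OF R] IntEq[OF R] by (simp add: box_real)
    then show "(modified_energy \<alpha> \<beta> U A K has_real_derivative - integral {0..1} (\<lambda>t. target t R)) (at R within S)"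
      by (rule has_field_derivative_transform_within[of _ _ _ _ 1]) (use R ME in auto)
    show "- integral {0..1} (\<lambda>t. target t R) \<le> 0"
      using integral_nonneg[OF integrable_continuous_interval[OF cT3[OF R]]] Tnn[OF R] by auto
  qed
  have part2: "modified_energy \<alpha> \<beta> U A K Rk \<le> modified_energy \<alpha> \<beta> U A K Ri * (Ri / Rk) ^ 4" if k: "Rk \<in> S" for Rk
  proof (rule mono_final[where E' = "\<lambda>x. - integral {0..1} (\<lambda>t. target t x)"])
    fix x assume "x \<in> {Rs<..Ri}"
    then have x: "x \<in> S" by (simp add: S_def)
    show "(modified_energy \<alpha> \<beta> U A K has_real_derivative - integral {0..1} (\<lambda>t. target t x)) (at x within {Rs<..Ri})"
      using part1[OF x] by (simp add: S_def)
    have "integral {0..1} (\<lambda>t. target t x) \<le> integral {0..1} (\<lambda>t. 4 / x * F t x)"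
      by (rule integral_le) (use Tle[OF x] integrable_continuous_interval[OF cT3[OF x]] integrable_on_cmult_left[OF Fint[OF x], of "4 / x"] in auto)
    also have "\<dots> = 4 / x * modified_energy \<alpha> \<beta> U A K x" using ME[OF x] by simp
    finally show "- (4 / x * modified_energy \<alpha> \<beta> U A K x) \<le> - integral {0..1} (\<lambda>t. target t x)" by simp
  next
    show "0 < Rs" by (rule pos(1))
    show "Rk \<in> {Rs<..Ri}" using k by (simp add: S_def)
  qed
  show ?thesis
    using part1 part2 unfolding S_def target_def by blast
qed

end
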